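(* Let $F$ be a graph of diameter $2$, $n=|V(F)|$, $t=\delta(F)$, and let $l>n$ be an integer. Then: (1) $\delta_i=f_{2l}$ for all $i\in\{1,\dots,t\}$; (2) $\delta_i=\delta_l$ for all $i\in\{t+1,\dots,l\}$; (3) $\delta_i=0$ for all $i\in\{l+t,l+t+1,\dots,2l-1\}$.
   Context: All graphs are simple, finite, undirected. The $F$-degree of a vertex $v$ in $G$ is the number of subgraphs of $G$ (not necessarily induced) isomorphic to $F$ and containing $v$. $A_{2l-1}$ is the graph with vertex set $\{1,\dots,2l-1\}$ in which distinct $i,j$ are adjacent iff $|i-j|\le l-1$; $F_{2l}$ is obtained from $A_{2l-1}$ by adding a new vertex $2l$ joined exactly to $1,\dots,t$. $z_i$ is the $F$-degree of $i$ in $A_{2l-1}$, $f_i$ is the $F$-degree of $i$ in $F_{2l}$, and $\delta_i=f_i-z_i$ for $i\in\{1,\dots,2l-1\}$. *)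

theory Defs
  imports Main
begin

definition simple_graph :: "'a set \<Rightarrow> 'a set set \<Rightarrow> bool" where
  "simple_graph V E \<longleftrightarrow> finite V \<and> (\<forall>e\<in>E. \<exists>u v. e = {u, v} \<and> u \<noteq> v \<and> u \<in> V \<and> v \<in> V)"

definition adj :: "'a set set \<Rightarrow> 'a \<Rightarrow> 'a \<Rightarrow> bool" where
  "adj E u v \<longleftrightarrow> {u, v} \<in> E"

definition degree :: "'a set \<Rightarrow> 'a set set \<Rightarrow> 'a \<Rightarrow> nat" where
  "degree V E v = card {u \<in> V. {u, v} \<in> E}"

definition min_degree :: "'a set \<Rightarrow> 'a set set \<Rightarrow> nat" where
  "min_degree V E = Min (degree V E ` V)"

definition is_walk :: "'a set \<Rightarrow> 'a set set \<Rightarrow> 'a list \<Rightarrow> bool" where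
  "is_walk V E p \<longleftrightarrow> p \<noteq> [] \<and> set p \<subseteq> V \<and> (\<forall>i. Suc i < length p \<longrightarrow> {p ! i, p ! Suc i} \<in> E)"

definition connected_by :: "'a set \<Rightarrow> 'a set set \<Rightarrow> 'a \<Rightarrow> 'a \<Rightarrow> nat \<Rightarrow> bool" where
  "connected_by V E u v k \<longleftrightarrow> (\<exists>p. is_walk V E p \<and> hd p = u \<and> last p = v \<and> length p = Suc k)"

definition graph_dist :: "'a set \<Rightarrow> 'a set set \<Rightarrow> 'a \<Rightarrow> 'a \<Rightarrow> nat" where
  "graph_dist V E u v = (LEAST k. connected_by V E u v k)"

definition connected_graph :: "'a set \<Rightarrow> 'a set set \<Rightarrow> bool" where
  "connected_graph V E \<longleftrightarrow> V \<noteq> {} \<and> (\<forall>u\<in>V. \<forall>v\<in>V. \<exists>k. connected_by V E u v k)"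

definition diameter :: "'a set \<Rightarrow> 'a set set \<Rightarrow> nat" where
  "diameter V E = Max {graph_dist V E u v | u v. u \<in> V \<and> v \<in> V}"

definition has_diameter :: "'a set \<Rightarrow> 'a set set \<Rightarrow> nat \<Rightarrow> bool" where
  "has_diameter V E d \<longleftrightarrow> connected_graph V E \<and> diameter V E = d"

definition graph_iso :: "'a set \<Rightarrow> 'a set set \<Rightarrow> 'b set \<Rightarrow> 'b set set \<Rightarrow> bool" where
  "graph_iso V1 E1 V2 E2 \<longleftrightarrow> (\<exists>f. bij_betw f V1 V2 \<and>
     (\<forall>u\<in>V1. \<forall>v\<in>V1. {u, v} \<in> E1 \<longleftrightarrow> {f u, f v} \<in> E2))"

definition is_subgraph :: "'b set \<Rightarrow> 'b set set \<Rightarrow> 'b set \<Rightarrow> 'b set set \<Rightarrow> bool" where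
  "is_subgraph W D V E \<longleftrightarrow> W \<subseteq> V \<and> D \<subseteq> E \<and> (\<forall>e\<in>D. e \<subseteq> W)"

definition F_degree :: "'a set \<Rightarrow> 'a set set \<Rightarrow> 'b set \<Rightarrow> 'b set set \<Rightarrow> 'b \<Rightarrow> nat" where
  "F_degree VF EF V E v = card {(W, D). is_subgraph W D V E \<and> v \<in> W \<and> graph_iso VF EF W D}"

definition A_V :: "nat \<Rightarrow> nat set" where
  "A_V l = {1 .. 2*l - 1}"

definition A_E :: "nat \<Rightarrow> nat set set" where
  "A_E l = {{i, j} | i j. i \<in> A_V l \<and> j \<in> A_V l \<and> i \<noteq> j \<and> (if i \<le> j then j - i else i - j) \<le> l - 1}"

definition FF_V :: "nat \<Rightarrow> nat set" where
  "FF_V l = {1 .. 2*l}"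

definition FF_E :: "nat \<Rightarrow> nat \<Rightarrow> nat set set" where
  "FF_E l t = A_E l \<union> {{2*l, i} | i. 1 \<le> i \<and> i \<le> t}"

end

theory Submission
  imports Defs
begin

lemma FFE_char:
  assumes "t < l"
  shows "{x,y} \<in> FF_E l t \<longleftrightarrow> x \<noteq> y \<and>
    ((1 \<le> x \<and> x \<le> 2*l-1 \<and> 1 \<le> y \<and> y \<le> 2*l-1 \<and> x \<le> y + (l-1) \<and> y \<le> x + (l-1))
     \<or> (x = 2*l \<and> 1 \<le> y \<and> y \<le> t) \<or> (y = 2*l \<and> 1 \<le> x \<and> x \<le> t))"
proof
  assume "{x,y} \<in> FF_E l t"
  then show "x \<noteq> y \<and>
    ((1 \<le> x \<and> x \<le> 2*l-1 \<and> 1 \<le> y \<and> y \<le> 2*l-1 \<and> x \<le> y + (l-1) \<and> y \<le> x + (l-1))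
     \<or> (x = 2*l \<and> 1 \<le> y \<and> y \<le> t) \<or> (y = 2*l \<and> 1 \<le> x \<and> x \<le> t))"
  proof -
    have "x \<noteq> y" using \<open>{x,y} \<in> FF_E l t\<close> assms unfolding FF_E_def A_E_def
      by (auto simp: doubleton_eq_iff)
    moreover have "(1 \<le> x \<and> x \<le> 2*l-1 \<and> 1 \<le> y \<and> y \<le> 2*l-1 \<and> x \<le> y + (l-1) \<and> y \<le> x + (l-1))
     \<or> (x = 2*l \<and> 1 \<le> y \<and> y \<le> t) \<or> (y = 2*l \<and> 1 \<le> x \<and> x \<le> t)"
    proof (cases "{x,y} \<in> A_E l")
      case True
      then obtain i j where ij: "{x,y} = {i,j}" "i \<in> A_V l" "j \<in> A_V l" "(if i \<le> j then j - i else i - j) \<le> l - 1"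
        unfolding A_E_def by blast
      have "(x = i \<and> y = j) \<or> (x = j \<and> y = i)" using ij(1) by (simp add: doubleton_eq_iff)
      then show ?thesis using ij(2-4) unfolding A_V_def by (auto split: if_splits)
    next
      case False
      then obtain i where i: "{x,y} = {2*l,i}" "1 \<le> i" "i \<le> t" using \<open>{x,y} \<in> FF_E l t\<close> unfolding FF_E_def by blast
      have "(x = 2*l \<and> y = i) \<or> (x = i \<and> y = 2*l)" using i(1) by (simp add: doubleton_eq_iff)
      then show ?thesis using i by auto
    qed
    ultimately show ?thesis by blast
  qed
next
  assume h: "x \<noteq> y \<and>
    ((1 \<le> x \<and> x \<le> 2*l-1 \<and> 1 \<le> y \<and> y \<le> 2*l-1 \<and> x \<le> y + (l-1) \<and> y \<le> x + (l-1))
     \<or> (x = 2*l \<and> 1 \<le> y \<and> y \<le> t) \<or> (y = 2*l \<and> 1 \<le> x \<and> x \<le> t))"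
  show "{x,y} \<in> FF_E l t"
  proof -
    { assume a: "1 \<le> x \<and> x \<le> 2*l-1 \<and> 1 \<le> y \<and> y \<le> 2*l-1 \<and> x \<le> y + (l-1) \<and> y \<le> x + (l-1)"
      have "(if x \<le> y then y - x else x - y) \<le> l - 1" using a by auto
      hence "\<exists>i j. {x,y} = {i,j} \<and> i \<in> A_V l \<and> j \<in> A_V l \<and> i \<noteq> j \<and> (if i \<le> j then j - i else i - j) \<le> l - 1"
        using a h unfolding A_V_def by (intro exI[of _ x] exI[of _ y]) auto
      hence "{x,y} \<in> A_E l" unfolding A_E_def mem_Collect_eq .
      hence ?thesis unfolding FF_E_def by blast }
    moreover
    { assume a: "x = 2*l \<and> 1 \<le> y \<and> y \<le> t"
      hence ?thesis unfolding FF_E_def by blast }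
    moreover
    { assume a: "y = 2*l \<and> 1 \<le> x \<and> x \<le> t"
      hence "{x,y} = {2*l, x}" by auto
      hence ?thesis unfolding FF_E_def using a by blast }
    ultimately show ?thesis using h by blast
  qed
qed

lemma FFE_form: "e \<in> FF_E l t \<Longrightarrow> \<exists>x y. e = {x,y}"
  unfolding FF_E_def A_E_def by blast

lemma dist2:
  assumes "simple_graph VF EF" "has_diameter VF EF 2" "x \<in> VF" "y \<in> VF"
  shows "x = y \<or> {x,y} \<in> EF \<or> (\<exists>c\<in>VF. {x,c} \<in> EF \<and> {c,y} \<in> EF)"
proof -
  obtain k where k: "connected_by VF EF x y k"
    using assms unfolding has_diameter_def connected_graph_def by blast
  define g where "g = graph_dist VF EF x y"
  have cb: "connected_by VF EF x y g" unfolding g_def graph_dist_def by (rule LeastI[of "connected_by VF EF x y", OF k])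
  have fin: "finite VF" using assms(1) unfolding simple_graph_def by blast
  have "{graph_dist VF EF u v | u v. u \<in> VF \<and> v \<in> VF} = (\<lambda>(u,v). graph_dist VF EF u v) ` (VF \<times> VF)"
    by auto
  hence fs: "finite {graph_dist VF EF u v | u v. u \<in> VF \<and> v \<in> VF}" using fin by simp
  have "g \<in> {graph_dist VF EF u v | u v. u \<in> VF \<and> v \<in> VF}" using assms g_def by blast
  hence "g \<le> diameter VF EF" unfolding diameter_def using fs by (simp add: Max_ge)
  hence g2: "g \<le> 2" using assms(2) unfolding has_diameter_def by simp
  obtain p where p: "is_walk VF EF p" "hd p = x" "last p = y" "length p = Suc g"
    using cb unfolding connected_by_def by blast
  have "g = 0 \<or> g = 1 \<or> g = 2" using g2 by auto
  moreover
  { assume "g = 0"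
    then obtain a where "p = [a]" using p(4) by (auto simp: length_Suc_conv)
    hence ?thesis using p by simp }
  moreover
  { assume "g = 1"
    then obtain a b where "p = [a,b]" using p(4) by (auto simp: length_Suc_conv numeral_2_eq_2)
    hence ?thesis using p unfolding is_walk_def by (metis One_nat_def last.simps list.sel(1) list.simps(3) nth_Cons_0 nth_Cons_Suc lessI length_Cons list.size(3) Suc_eq_plus1_left Suc_1 add_0_right) }
  moreover
  { assume "g = 2"
    then obtain a b c where pc: "p = [a,b,c]" using p(4) by (auto simp: length_Suc_conv numeral_2_eq_2)
    have e1: "{p!0, p!1} \<in> EF" using p(1) pc unfolding is_walk_def by auto
    have e2: "{p!1, p!2} \<in> EF" using p(1) pc unfolding is_walk_def
      by (metis Suc_1 lessI length_Cons list.size(3) numeral_3_eq_3 One_nat_def)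
    have "b \<in> VF" using p(1) pc unfolding is_walk_def by auto
    hence ?thesis using e1 e2 pc p by auto }
  ultimately show ?thesis by blast
qed

lemma deg_transfer:
  assumes "graph_iso VF EF W D" "finite VF" "w \<in> W"
  shows "min_degree VF EF \<le> card {u\<in>W. {u,w}\<in>D}"
proof -
  obtain f where f: "bij_betw f VF W" "\<forall>u\<in>VF. \<forall>v\<in>VF. {u, v} \<in> EF \<longleftrightarrow> {f u, f v} \<in> D"
    using assms(1) unfolding graph_iso_def by blast
  obtain x where x: "x \<in> VF" "w = f x" using f(1) assms(3) by (auto simp: bij_betw_def)
  have "min_degree VF EF \<le> degree VF EF x"
    unfolding min_degree_def using assms(2) x(1) by (simp add: Min_le)
  also have "degree VF EF x = card (f ` {u\<in>VF. {u,x}\<in>EF})"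
    unfolding degree_def
    by (rule card_image[symmetric], rule inj_on_subset[OF bij_betw_imp_inj_on[OF f(1)]]) auto
  also have "f ` {u\<in>VF. {u,x}\<in>EF} = {u\<in>W. {u,w}\<in>D}"
  proof
    show "f ` {u\<in>VF. {u,x}\<in>EF} \<subseteq> {u\<in>W. {u,w}\<in>D}"
      using f x by (auto simp: bij_betw_def)
    show "{u\<in>W. {u,w}\<in>D} \<subseteq> f ` {u\<in>VF. {u,x}\<in>EF}"
    proof
      fix u assume u: "u \<in> {u\<in>W. {u,w}\<in>D}"
      then obtain y where y: "y \<in> VF" "u = f y" using f(1) by (auto simp: bij_betw_def)
      then show "u \<in> f ` {u\<in>VF. {u,x}\<in>EF}" using f(2) x u by auto
    qed
  qed
  finally show ?thesis .
qed

lemma sub_A_iff: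
  assumes "l \<ge> 1"
  shows "is_subgraph W D (A_V l) (A_E l) \<longleftrightarrow> is_subgraph W D (FF_V l) (FF_E l t) \<and> 2*l \<notin> W"
proof
  assume h: "is_subgraph W D (A_V l) (A_E l)"
  then show "is_subgraph W D (FF_V l) (FF_E l t) \<and> 2*l \<notin> W"
  proof -
    have W: "W \<subseteq> {1..2*l-1}" using h unfolding is_subgraph_def A_V_def by auto
    hence "W \<subseteq> FF_V l" unfolding FF_V_def by (auto simp: subset_iff)
    moreover have "2*l \<notin> W" using W assms by auto
    ultimately show ?thesis using h unfolding is_subgraph_def FF_E_def by auto
  qed
next
  assume h: "is_subgraph W D (FF_V l) (FF_E l t) \<and> 2*l \<notin> W"
  have "D \<subseteq> A_E l"
  proof
    fix e assume e: "e \<in> D"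
    hence "e \<in> FF_E l t" "e \<subseteq> W" using h unfolding is_subgraph_def by auto
    thus "e \<in> A_E l" using h unfolding FF_E_def by auto
  qed
  moreover have "W \<subseteq> A_V l"
  proof
    fix x assume x: "x \<in> W"
    hence "1 \<le> x" "x \<le> 2*l" "x \<noteq> 2*l" using h unfolding is_subgraph_def FF_V_def by auto
    thus "x \<in> A_V l" unfolding A_V_def by auto
  qed
  ultimately show "is_subgraph W D (A_V l) (A_E l)" using h unfolding is_subgraph_def by auto
qed

lemma fin_cop: "finite {(W,D). is_subgraph W D (FF_V l) (FF_E l t) \<and> P W D}"
proof (rule finite_subset)
  show "{(W,D). is_subgraph W D (FF_V l) (FF_E l t) \<and> P W D} \<subseteq> Pow (FF_V l) \<times> Pow (Pow (FF_V l))"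
    unfolding is_subgraph_def by auto
  show "finite (Pow (FF_V l) \<times> Pow (Pow (FF_V l)))" unfolding FF_V_def by simp
qed

definition sw :: "nat \<Rightarrow> nat \<Rightarrow> nat \<Rightarrow> nat" where
  "sw i j x = (if x = i then j else if x = j then i else x)"

lemma sw_inv[simp]: "sw i j (sw i j x) = x" unfolding sw_def by auto
lemma sw_comm: "sw i j = sw j i" unfolding sw_def by auto
lemma sw_img_inv[simp]: "sw i j ` (sw i j ` A) = A" by (simp add: image_image)

lemma sw_edge:
  assumes "t < l" "i \<in> {t+1..l}" "j \<in> {t+1..l}"
    and "x \<in> {1..t+l-1} \<union> {2*l}" "y \<in> {1..t+l-1} \<union> {2*l}"
  shows "{sw i j x, sw i j y} \<in> FF_E l t \<longleftrightarrow> {x,y} \<in> FF_E l t"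
proof -
  have K: "{k,y} \<in> FF_E l t \<longleftrightarrow> y \<noteq> k \<and> y \<noteq> 2*l" if k: "k \<in> {t+1..l}" and y: "y \<in> {1..t+l-1} \<union> {2*l}" for k y
  proof (cases "y = 2*l")
    case True
    then show ?thesis unfolding FFE_char[OF assms(1)] using k assms(1) by auto
  next
    case False
    hence y': "1 \<le> y" "y \<le> t+l-1" using y by auto
    have "1 \<le> k" "k \<le> 2*l-1" "y \<le> 2*l-1" "k \<le> y + (l-1)" "y \<le> k + (l-1)" "k \<noteq> 2*l"
      using k y' assms(1) by auto
    then show ?thesis unfolding FFE_char[OF assms(1)] using False y' by auto
  qed
  have Ks: "{y,k} \<in> FF_E l t \<longleftrightarrow> y \<noteq> k \<and> y \<noteq> 2*l" if "k \<in> {t+1..l}" "y \<in> {1..t+l-1} \<union> {2*l}" for k y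
    using K[OF that] by (simp add: insert_commute)
  consider (n) "x \<notin> {i,j}" "y \<notin> {i,j}" | (xa) "x \<in> {i,j}" "y \<notin> {i,j}"
    | (ya) "x \<notin> {i,j}" "y \<in> {i,j}" | (b) "x \<in> {i,j}" "y \<in> {i,j}" by blast
  then show ?thesis
  proof cases
    case n
    then show ?thesis unfolding sw_def by auto
  next
    case xa
    have "sw i j y = y" using xa unfolding sw_def by auto
    moreover have "sw i j x \<in> {i,j}" using xa unfolding sw_def by auto
    ultimately show ?thesis using K assms(2,3) xa assms(5) by (metis insertE singletonD)
  next
    case ya
    have "sw i j x = x" using ya unfolding sw_def by auto
    moreover have "sw i j y \<in> {i,j}" using ya unfolding sw_def by auto
    ultimately show ?thesis using Ks assms(2,3) ya assms(4) by (metis insertE singletonD)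
  next
    case b
    show ?thesis
    proof (cases "x = y")
      case True
      then show ?thesis using FFE_char[OF assms(1), of x x] FFE_char[OF assms(1), of "sw i j x" "sw i j x"] by simp
    next
      case False
      have "{sw i j x, sw i j y} = {x,y}" using b False unfolding sw_def by auto
      then show ?thesis by simp
    qed
  qed
qed

lemma nb_lemma:
  assumes "is_subgraph W D (FF_V l) (FF_E l t)" "2*l \<in> W" "graph_iso VF EF W D"
    "finite VF" "t = min_degree VF EF" "t < l"
  shows "{1..t} \<subseteq> W"
proof -
  define N where "N = {u\<in>W. {u,2*l}\<in>D}"
  have c1: "t \<le> card N" unfolding N_def assms(5) by (rule deg_transfer[OF assms(3) assms(4) assms(2)])
  have sub: "N \<subseteq> {1..t}"
  proof
    fix u assume "u \<in> N"
    hence "{u,2*l} \<in> FF_E l t" using assms(1) unfolding N_def is_subgraph_def by auto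
    thus "u \<in> {1..t}" unfolding FFE_char[OF assms(6)] using assms(6) by auto
  qed
  have "card N \<le> t" using card_mono[OF _ sub] by simp
  hence "N = {1..t}" using c1 sub by (intro card_subset_eq) auto
  thus ?thesis unfolding N_def by auto
qed

lemma inS_lemma:
  assumes "is_subgraph W D (FF_V l) (FF_E l t)" "2*l \<in> W" "graph_iso VF EF W D"
    "simple_graph VF EF" "has_diameter VF EF 2" "t < l"
  shows "W \<subseteq> {1..t+l-1} \<union> {2*l}"
proof
  fix b assume b: "b \<in> W"
  obtain f where f: "bij_betw f VF W" "\<forall>u\<in>VF. \<forall>v\<in>VF. {u, v} \<in> EF \<longleftrightarrow> {f u, f v} \<in> D"
    using assms(3) unfolding graph_iso_def by blast
  obtain x where x: "x \<in> VF" "2*l = f x" using f(1) assms(2) by (auto simp: bij_betw_def)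
  obtain y where y: "y \<in> VF" "b = f y" using f(1) b by (auto simp: bij_betw_def)
  have DE: "D \<subseteq> FF_E l t" using assms(1) unfolding is_subgraph_def by auto
  have "x = y \<or> {x,y} \<in> EF \<or> (\<exists>c\<in>VF. {x,c} \<in> EF \<and> {c,y} \<in> EF)"
    by (rule dist2[OF assms(4) assms(5) x(1) y(1)])
  moreover
  { assume "x = y" hence "b \<in> {1..t+l-1} \<union> {2*l}" using x y by simp }
  moreover
  { assume "{x,y} \<in> EF"
    hence "{2*l, b} \<in> FF_E l t" using f(2) x y DE by auto
    hence "b \<in> {1..t+l-1} \<union> {2*l}" unfolding FFE_char[OF assms(6)] using assms(6) by auto }
  moreover
  { fix c assume c: "c \<in> VF" "{x,c} \<in> EF" "{c,y} \<in> EF"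
    hence e1: "{2*l, f c} \<in> FF_E l t" and e2: "{f c, b} \<in> FF_E l t" using f(2) x y DE by auto
    from e1 have "1 \<le> f c" "f c \<le> t" unfolding FFE_char[OF assms(6)] using assms(6) by auto
    with e2 have "b \<in> {1..t+l-1} \<union> {2*l}" unfolding FFE_char[OF assms(6)] using assms(6) by auto }
  ultimately show "b \<in> {1..t+l-1} \<union> {2*l}" by blast
qed

lemma swap_copy:
  assumes "t < l" "i \<in> {t+1..l}" "j \<in> {t+1..l}"
    and sub: "is_subgraph W D (FF_V l) (FF_E l t)" and iW: "i \<in> W" and lW: "2*l \<in> W"
    and iso: "graph_iso VF EF W D"
    and WS: "W \<subseteq> {1..t+l-1} \<union> {2*l}"
  shows "is_subgraph (sw i j ` W) (image (sw i j) ` D) (FF_V l) (FF_E l t) \<and> j \<in> sw i j ` W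
     \<and> 2*l \<in> sw i j ` W \<and> graph_iso VF EF (sw i j ` W) (image (sw i j) ` D)"
proof (intro conjI)
  have ij: "i \<in> FF_V l" "j \<in> FF_V l" using assms(1-3) unfolding FF_V_def by auto
  have "sw i j ` W \<subseteq> FF_V l"
  proof
    fix y assume "y \<in> sw i j ` W"
    then obtain x where "x \<in> W" "y = sw i j x" by auto
    thus "y \<in> FF_V l" using sub ij unfolding is_subgraph_def sw_def by auto
  qed
  moreover have "image (sw i j) ` D \<subseteq> FF_E l t"
  proof
    fix e' assume "e' \<in> image (sw i j) ` D"
    then obtain e where e: "e \<in> D" "e' = sw i j ` e" by auto
    hence eF: "e \<in> FF_E l t" "e \<subseteq> W" using sub unfolding is_subgraph_def by auto
    then obtain x y where xy: "e = {x,y}" using FFE_form by blast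
    have xyS: "{x,y} \<subseteq> {1..t+l-1} \<union> {2*l}" using xy eF(2) WS by (metis subset_trans)
    have xS: "x \<in> {1..t+l-1} \<union> {2*l}" using xyS by (simp only: insert_subset)
    have yS: "y \<in> {1..t+l-1} \<union> {2*l}" using xyS by (simp only: insert_subset empty_subsetI simp_thms)
    have "{sw i j x, sw i j y} \<in> FF_E l t" using sw_edge[OF assms(1-3) xS yS] eF(1) xy by simp
    thus "e' \<in> FF_E l t" using e xy by simp
  qed
  moreover have "\<forall>e\<in>image (sw i j) ` D. e \<subseteq> sw i j ` W" using sub unfolding is_subgraph_def by blast
  ultimately show "is_subgraph (sw i j ` W) (image (sw i j) ` D) (FF_V l) (FF_E l t)"
    unfolding is_subgraph_def by blast
  show "j \<in> sw i j ` W" using iW by (metis image_eqI sw_def)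
  have "sw i j (2*l) = 2*l" using assms(1-3) unfolding sw_def by auto
  thus "2*l \<in> sw i j ` W" using lW by (metis image_eqI)
  obtain f where f: "bij_betw f VF W" "\<forall>u\<in>VF. \<forall>v\<in>VF. {u, v} \<in> EF \<longleftrightarrow> {f u, f v} \<in> D"
    using iso unfolding graph_iso_def by blast
  have injs: "inj (sw i j)" by (metis injI sw_inv)
  have "bij_betw (sw i j \<circ> f) VF (sw i j ` W)"
  proof -
    have "bij_betw (sw i j) W (sw i j ` W)" using injs by (simp add: bij_betw_imageI inj_on_subset)
    thus ?thesis using bij_betw_trans[OF f(1)] by blast
  qed
  moreover have "\<forall>u\<in>VF. \<forall>v\<in>VF. {u, v} \<in> EF \<longleftrightarrow> {(sw i j \<circ> f) u, (sw i j \<circ> f) v} \<in> image (sw i j) ` D"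
  proof (intro ballI)
    fix u v assume uv: "u \<in> VF" "v \<in> VF"
    have "{(sw i j \<circ> f) u, (sw i j \<circ> f) v} = sw i j ` {f u, f v}" by simp
    moreover have "(sw i j ` {f u, f v} \<in> image (sw i j) ` D) \<longleftrightarrow> {f u, f v} \<in> D"
    proof
      assume "sw i j ` {f u, f v} \<in> image (sw i j) ` D"
      then obtain e where "e \<in> D" "sw i j ` {f u, f v} = sw i j ` e" by auto
      hence "sw i j ` sw i j ` {f u, f v} = sw i j ` sw i j ` e" by simp
      thus "{f u, f v} \<in> D" using \<open>e \<in> D\<close> by simp
    next
      assume "{f u, f v} \<in> D"
      thus "sw i j ` {f u, f v} \<in> image (sw i j) ` D" by (rule imageI)
    qed
    ultimately show "{u, v} \<in> EF \<longleftrightarrow> {(sw i j \<circ> f) u, (sw i j \<circ> f) v} \<in> image (sw i j) ` D"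
      using f(2) uv by simp
  qed
  ultimately show "graph_iso VF EF (sw i j ` W) (image (sw i j) ` D)"
    unfolding graph_iso_def by blast
qed

theorem lemma5:
  fixes VF :: "'a set" and EF :: "'a set set" and l :: nat
  assumes "simple_graph VF EF"
    and "has_diameter VF EF 2"
    and "l > card VF"
  defines "t \<equiv> min_degree VF EF"
  defines "z \<equiv> \<lambda>i. int (F_degree VF EF (A_V l) (A_E l) i)"
  defines "f \<equiv> \<lambda>i. int (F_degree VF EF (FF_V l) (FF_E l t) i)"
  defines "\<delta> \<equiv> \<lambda>i. f i - z i"
  shows "(\<forall>i\<in>{1..t}. \<delta> i = f (2*l))
       \<and> (\<forall>i\<in>{t+1..l}. \<delta> i = \<delta> l)
       \<and> (\<forall>i\<in>{l+t..2*l-1}. \<delta> i = 0)"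
proof -
  have finVF: "finite VF" using assms(1) unfolding simple_graph_def by blast
  obtain x0 where x0: "x0 \<in> VF" using assms(2) unfolding has_diameter_def connected_graph_def by blast
  have "t \<le> degree VF EF x0" unfolding t_def min_degree_def using finVF x0 by (simp add: Min_le)
  also have "degree VF EF x0 \<le> card VF" unfolding degree_def using finVF by (intro card_mono) auto
  finally have tl: "t < l" using assms(3) by simp
  hence l1: "l \<ge> 1" by simp
  define B where "B i = {(W,D). is_subgraph W D (FF_V l) (FF_E l t) \<and> (i \<in> W \<and> 2*l \<in> W \<and> graph_iso VF EF W D)}" for i
  have dec: "\<delta> i = int (card (B i))" for i
  proof -
    define Aset where "Aset = {(W,D). is_subgraph W D (FF_V l) (FF_E l t) \<and> (2*l \<notin> W \<and> i \<in> W \<and> graph_iso VF EF W D)}"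
    have zA: "z i = int (card Aset)" unfolding z_def F_degree_def Aset_def
      using sub_A_iff[OF l1, where t=t] by (metis (no_types, lifting))
    have "{(W,D). is_subgraph W D (FF_V l) (FF_E l t) \<and> i \<in> W \<and> graph_iso VF EF W D} = Aset \<union> B i"
      unfolding Aset_def B_def by auto
    moreover have "Aset \<inter> B i = {}" unfolding Aset_def B_def by auto
    moreover have "finite Aset" "finite (B i)" unfolding Aset_def B_def by (rule fin_cop)+
    ultimately have "f i = int (card Aset) + int (card (B i))" unfolding f_def F_degree_def
      by (simp add: card_Un_disjoint)
    thus ?thesis unfolding \<delta>_def zA by simp
  qed
  have f2l: "f (2*l) = int (card {(W,D). is_subgraph W D (FF_V l) (FF_E l t) \<and> 2*l \<in> W \<and> graph_iso VF EF W D})"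
    unfolding f_def F_degree_def by simp
  have P1: "\<forall>i\<in>{1..t}. \<delta> i = f (2*l)"
  proof
    fix i assume i: "i \<in> {1..t}"
    have "B i = {(W,D). is_subgraph W D (FF_V l) (FF_E l t) \<and> 2*l \<in> W \<and> graph_iso VF EF W D}"
      unfolding B_def using nb_lemma[OF _ _ _ finVF t_def[THEN meta_eq_to_obj_eq] tl] i by blast
    thus "\<delta> i = f (2*l)" using dec f2l by simp
  qed
  have P3: "\<forall>i\<in>{l+t..2*l-1}. \<delta> i = 0"
  proof
    fix i assume i: "i \<in> {l+t..2*l-1}"
    have "B i = {}"
    proof (rule ccontr)
      assume "B i \<noteq> {}"
      then obtain W D where "is_subgraph W D (FF_V l) (FF_E l t)" "i \<in> W" "2*l \<in> W" "graph_iso VF EF W D"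
        unfolding B_def by auto
      hence "i \<in> {1..t+l-1} \<union> {2*l}" using inS_lemma[OF _ _ _ assms(1,2) tl] by blast
      thus False using i l1 by auto
    qed
    thus "\<delta> i = 0" using dec by simp
  qed
  have le: "card (B i) \<le> card (B j)" if ij: "i \<in> {t+1..l}" "j \<in> {t+1..l}" for i j
  proof -
    define \<Phi> where "\<Phi> = (\<lambda>(W::nat set, D::nat set set). (sw i j ` W, image (sw i j) ` D))"
    have "inj \<Phi>"
    proof (rule injI)
      fix a b assume "\<Phi> a = \<Phi> b"
      then obtain W1 D1 W2 D2 where ab: "a = (W1,D1)" "b = (W2,D2)" "sw i j ` W1 = sw i j ` W2"
        "image (sw i j) ` D1 = image (sw i j) ` D2" unfolding \<Phi>_def by (cases a, cases b) auto
      have "sw i j ` sw i j ` W1 = sw i j ` sw i j ` W2" using ab(3) by simp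
      moreover have "image (sw i j) ` image (sw i j) ` D1 = image (sw i j) ` image (sw i j) ` D2"
        using ab(4) by simp
      ultimately show "a = b" using ab(1,2) by (simp add: image_image)
    qed
    moreover have "\<Phi> ` B i \<subseteq> B j"
    proof
      fix y assume "y \<in> \<Phi> ` B i"
      then obtain W D where WD: "(W,D) \<in> B i" "y = \<Phi> (W,D)" by auto
      hence c: "is_subgraph W D (FF_V l) (FF_E l t)" "i \<in> W" "2*l \<in> W" "graph_iso VF EF W D"
        unfolding B_def by auto
      have WS: "W \<subseteq> {1..t+l-1} \<union> {2*l}" using inS_lemma[OF c(1,3,4) assms(1,2) tl] .
      show "y \<in> B j" using swap_copy[OF tl ij c WS] WD(2) unfolding B_def \<Phi>_def by simp
    qed
    moreover have "finite (B j)" unfolding B_def by (rule fin_cop)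
    ultimately show ?thesis by (meson card_inj_on_le inj_on_subset subset_UNIV)
  qed
  have P2: "\<forall>i\<in>{t+1..l}. \<delta> i = \<delta> l"
  proof
    fix i assume i: "i \<in> {t+1..l}"
    have l: "l \<in> {t+1..l}" using tl by auto
    have "card (B i) = card (B l)" using le[OF i l] le[OF l i] by simp
    thus "\<delta> i = \<delta> l" using dec by simp
  qed
  show ?thesis using P1 P2 P3 by blast
qed

end
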